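(* Let $S$ be a non-empty finite reverse-factor-free set of strings of total length $n$, and let $k_{\min}$ be the length of a shortest string that contains, for every $s\in S$, $s$ or $s^R$ as a factor. Let $w$ be an output of the algorithm Greedy-R on $S$ (for any way of breaking ties). Then $$n-|w|\;\ge\;\tfrac12\,(n-k_{\min}),$$ i.e., Greedy-R has compression ratio $\tfrac12$.
   Context: For strings $x,y$, $\mathit{ov}(x,y)$ is the length of the longest suffix of $x$ that is also a prefix of $y$; $\mathrm{pref}(x,y)$ is $x$ with its suffix of length $\mathit{ov}(x,y)$ removed, and $x\otimes y=\mathrm{pref}(x,y)\,y$. $x^R$ denotes the reversal of $x$. For a set $X$ of strings, $X^R=\{x^R: x\in X\}$ and $\widetilde{X}=X\cup X^R$. A set $X$ is reverse-factor-free if there are no distinct $x,y\in X$ such that $x$ is a factor of $y$ or of $y^R$. The procedure Make-Reverse-Factor-Free$(X)$ repeatedly removes from the current set a string $x$ for which some other string $y\neq x$ of the current set has $x$ as a factor of $y$ or of $y^R$, until no such string remains (on a reverse-factor-free set it does nothing). Algorithm Greedy-R$(S)$: first set $S:=$ Make-Reverse-Factor-Free$(S)$. Then, while $|S|>1$: among all pairs $(u,v)$ with $u,v\in\widetilde{S}$ and $u\notin\{v,v^R\}$, choose one with maximal $\mathit{ov}(u,v)$ (ties broken arbitrarily); set $S:=S\cup\{u\otimes v\}$ and then remove from $S$ all of $u,v,u^R,v^R$ that belong to $S$. Return the only element of $S$. *)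

theory Defs
  imports Main "HOL-Library.Sublist"
begin

text \<open>Strings are lists over an arbitrary alphabet 'a; "x is a factor of y" is sublist x y.\<close>

definition ov :: "'a list \<Rightarrow> 'a list \<Rightarrow> nat" where
  "ov x y = (GREATEST k. k \<le> length x \<and> k \<le> length y \<and> drop (length x - k) x = take k y)"

definition pref :: "'a list \<Rightarrow> 'a list \<Rightarrow> 'a list" where
  "pref x y = take (length x - ov x y) x"

definition otimes :: "'a list \<Rightarrow> 'a list \<Rightarrow> 'a list" where
  "otimes x y = pref x y @ y"

definition tilde :: "'a list set \<Rightarrow> 'a list set" where
  "tilde X = X \<union> rev ` X"

definition rev_factor_free :: "'a list set \<Rightarrow> bool" where
  "rev_factor_free X \<longleftrightarrow>
     (\<forall>x\<in>X. \<forall>y\<in>X. x \<noteq> y \<longrightarrow> \<not> (sublist x y \<or> sublist x (rev y)))"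

text \<open>Make-Reverse-Factor-Free as a (nondeterministic) relation: mrff X Y means Y is a possible result.\<close>
inductive mrff :: "'a list set \<Rightarrow> 'a list set \<Rightarrow> bool" where
  finished: "rev_factor_free X \<Longrightarrow> mrff X X"
| remove: "\<lbrakk> x \<in> X; y \<in> X; y \<noteq> x; sublist x y \<or> sublist x (rev y); mrff (X - {x}) Y \<rbrakk>
            \<Longrightarrow> mrff X Y"

text \<open>The merging loop of Greedy-R, with arbitrary tie-breaking: greedy_loop S w means w is a possible output.\<close>
inductive greedy_loop :: "'a list set \<Rightarrow> 'a list \<Rightarrow> bool" where
  single: "greedy_loop {w} w"
| merge: "\<lbrakk> finite S; card S > 1; u \<in> tilde S; v \<in> tilde S; u \<noteq> v; u \<noteq> rev v;
            \<forall>u'\<in>tilde S. \<forall>v'\<in>tilde S. u' \<noteq> v' \<and> u' \<noteq> rev v' \<longrightarrow> ov u' v' \<le> ov u v;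
            greedy_loop ((S \<union> {otimes u v}) - {u, v, rev u, rev v}) w \<rbrakk>
          \<Longrightarrow> greedy_loop S w"

definition greedy_R :: "'a list set \<Rightarrow> 'a list \<Rightarrow> bool" where
  "greedy_R S w \<longleftrightarrow> (\<exists>S'. mrff S S' \<and> greedy_loop S' w)"

definition total_length :: "'a list set \<Rightarrow> nat" where
  "total_length S = (\<Sum>s\<in>S. length s)"

definition k_min :: "'a list set \<Rightarrow> nat" where
  "k_min S = (LEAST k. \<exists>t. length t = k \<and> (\<forall>s\<in>S. sublist s t \<or> sublist (rev s) t))"

end

theory Submission
  imports Defs "HOL-Library.Multiset"
begin


lemma ov_spec:
  "ov x y \<le> length x \<and> ov x y \<le> length y \<and> drop (length x - ov x y) x = take (ov x y) y"
proof -
  have ex: "\<exists>k. k \<le> length x \<and> k \<le> length y \<and> drop (length x - k) x = take k y"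
    by (rule exI[of _ 0]) simp
  show ?thesis unfolding ov_def
    by (rule GreatestI_ex_nat[OF ex, of "length x"]) auto
qed

lemma ov_ge:
  assumes "k \<le> length x" "k \<le> length y" "drop (length x - k) x = take k y"
  shows "k \<le> ov x y"
  unfolding ov_def by (rule Greatest_le_nat[of _ k "length x"]) (use assms in auto)

lemma ov_rev: "ov (rev y) (rev x) = ov x y"
proof (rule antisym)
  have *: "ov x y \<le> ov (rev y) (rev x)" for x y :: "'b list"
  proof (rule ov_ge)
    have s: "drop (length x - ov x y) x = take (ov x y) y" using ov_spec by blast
    show "ov x y \<le> length (rev y)" "ov x y \<le> length (rev x)" using ov_spec by auto
    have "drop (length (rev y) - ov x y) (rev y) = rev (take (ov x y) y)"
      by (simp add: rev_take)
    also have "\<dots> = rev (drop (length x - ov x y) x)" using s by simp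
    also have "\<dots> = take (length x - (length x - ov x y)) (rev x)"
      by (rule rev_drop)
    also have "\<dots> = take (ov x y) (rev x)" using ov_spec[of x y] by simp
    finally show "drop (length (rev y) - ov x y) (rev y) = take (ov x y) (rev x)" .
  qed
  show "ov x y \<le> ov (rev y) (rev x)" by (rule *)
  show "ov (rev y) (rev x) \<le> ov x y" using *[of "rev y" "rev x"] by simp
qed

lemma ov_prefix_mono:
  assumes "prefix y y'" shows "ov a y \<le> ov a y'"
proof (rule ov_ge)
  have s: "ov a y \<le> length a" "ov a y \<le> length y" "drop (length a - ov a y) a = take (ov a y) y"
    using ov_spec by blast+
  have l: "length y \<le> length y'" using assms prefix_length_le by blast
  show "ov a y \<le> length a" "ov a y \<le> length y'" using s l by auto
  obtain z where "y' = y @ z" using assms prefixE by blast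
  then show "drop (length a - ov a y) a = take (ov a y) y'" using s by simp
qed

lemma ov_suffix_mono:
  assumes "suffix x x'" shows "ov x b \<le> ov x' b"
proof (rule ov_ge)
  have s: "ov x b \<le> length x" "ov x b \<le> length b" "drop (length x - ov x b) x = take (ov x b) b"
    using ov_spec by blast+
  obtain z where z: "x' = z @ x" using assms suffixE by blast
  show "ov x b \<le> length x'" "ov x b \<le> length b" using s z by auto
  show "drop (length x' - ov x b) x' = take (ov x b) b" using s z by simp
qed

lemma otimes_alt: "otimes u v = take (length u - ov u v) u @ v"
  by (simp add: otimes_def pref_def)

lemma prefix_otimes: "prefix u (otimes u v)"
proof -
  have s: "drop (length u - ov u v) u = take (ov u v) v" using ov_spec by blast
  have "u = take (length u - ov u v) u @ take (ov u v) v"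
    by (metis append_take_drop_id s)
  also have "prefix \<dots> (take (length u - ov u v) u @ v)" by (simp add: take_is_prefix)
  finally show ?thesis by (simp add: otimes_alt)
qed

lemma suffix_otimes: "suffix v (otimes u v)"
  by (simp add: otimes_alt suffix_def)

lemma length_otimes: "length (otimes u v) = length u - ov u v + length v"
  using ov_spec[of u v] by (simp add: otimes_alt)

lemma monge:
  assumes "ov c v \<le> ov u v" "ov u b \<le> ov u v"
  shows "ov c v + ov u b \<le> ov c b + ov u v"
proof (cases "ov c v + ov u b \<le> ov u v")
  case True then show ?thesis by simp
next
  case False
  define a where "a = ov c v"
  define be where "be = ov u b"
  define d where "d = ov u v"
  define k where "k = a + be - d"
  have sa: "a \<le> length c" "a \<le> length v" "drop (length c - a) c = take a v"
    using ov_spec unfolding a_def by blast+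
  have sb: "be \<le> length u" "be \<le> length b" "drop (length u - be) u = take be b"
    using ov_spec unfolding be_def by blast+
  have sd: "d \<le> length u" "d \<le> length v" "drop (length u - d) u = take d v"
    using ov_spec unfolding d_def by blast+
  have ad: "a \<le> d" "be \<le> d" "d < a + be" using assms False unfolding a_def be_def d_def by auto
  have "k \<le> ov c b"
  proof (rule ov_ge)
    show "k \<le> length c" "k \<le> length b" using sa sb ad unfolding k_def by auto
    have e: "length c - k = (a - k) + (length c - a)" using sa ad unfolding k_def by arith
    have "drop (length c - k) c = drop (a - k) (drop (length c - a) c)"
      by (simp only: e drop_drop)
    also have "\<dots> = drop (a - k) (take a v)" using sa by simp
    also have "\<dots> = drop (a - k) (take a (take d v))" using ad by simp
    also have "\<dots> = drop (a - k) (take a (drop (length u - d) u))" using sd by simp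
    also have "\<dots> = take k (drop (length u - d + (a - k)) u)"
      using ad sd(1) unfolding k_def by (simp add: drop_take add.commute)
    also have "length u - d + (a - k) = length u - be" using ad sd unfolding k_def by simp
    also have "take k (drop (length u - be) u) = take k (take be b)" using sb by simp
    also have "\<dots> = take k b" using ad unfolding k_def by simp
    finally show "drop (length c - k) c = take k b" .
  qed
  then show ?thesis using ad unfolding k_def a_def be_def d_def by simp
qed


fun W :: "'a list list \<Rightarrow> nat" where
  "W (x # y # zs) = ov x y + W (y # zs)"
| "W _ = 0"

lemma W_cons: "W (x # A) = (if A = [] then 0 else ov x (hd A)) + W A"
  by (cases A) auto

lemma W_append_cons: "W (A @ x # B) = W (A @ [x]) + W (x # B)"
proof (induction A)
  case Nil then show ?case by simp
next
  case (Cons a A) then show ?case by (cases A) auto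
qed

lemma W_append_ge: "W A + W B \<le> W (A @ B)"
proof (induction A)
  case Nil then show ?case by simp
next
  case (Cons a A) then show ?case by (cases A; cases B) auto
qed

lemma W_snoc: "W (A @ [x]) = W A + (if A = [] then 0 else ov (last A) x)"
proof (induction A)
  case Nil then show ?case by simp
next
  case (Cons a A) then show ?case by (cases A) auto
qed

definition rp :: "'a list list \<Rightarrow> 'a list list" where
  "rp xs = rev (map rev xs)"

lemma W_rp: "W (rp xs) = W xs"
proof (induction xs)
  case Nil then show ?case by (simp add: rp_def)
next
  case (Cons x xs)
  have "W (rp (x # xs)) = W (rp xs @ [rev x])" by (simp add: rp_def)
  also have "\<dots> = W xs + (if xs = [] then 0 else ov x (hd xs))"
    using Cons by (simp add: W_snoc rp_def last_rev hd_map ov_rev)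
  also have "\<dots> = W (x # xs)" by (simp add: W_cons)
  finally show ?case .
qed

lemma W_cons_le: "(\<forall>y\<in>set M. ov x y \<le> d) \<Longrightarrow> W (x # M) \<le> d + W M"
  by (cases M) auto

lemma W_snoc_le: "(\<forall>y\<in>set M. ov y x \<le> d) \<Longrightarrow> W (M @ [x]) \<le> W M + d"
  by (cases "M = []") (auto simp: W_snoc)

lemma W_snoc_mono: "(\<forall>a. ov a x \<le> ov a x') \<Longrightarrow> W (M @ [x]) \<le> W (M @ [x'])"
  by (simp add: W_snoc)

lemma W_cons_mono: "(\<forall>b. ov x b \<le> ov x' b) \<Longrightarrow> W (x # M) \<le> W (x' # M)"
  by (simp add: W_cons)

definition cls :: "'a list \<Rightarrow> 'a list set" where
  "cls x = {x, rev x}"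

lemma cls_rev [simp]: "cls (rev x) = cls x"
  by (auto simp: cls_def)

lemma cls_eq: "cls x = cls y \<longleftrightarrow> x = y \<or> x = rev y"
  by (auto simp: cls_def doubleton_eq_iff)

lemma tilde_cls: "x \<in> tilde T \<longleftrightarrow> (\<exists>s\<in>T. cls x = cls s)"
  by (auto simp: tilde_def cls_eq)

lemma cls_inj:
  assumes "rev_factor_free T" "s \<in> T" "s' \<in> T" "cls s = cls s'"
  shows "s = s'"
  using assms unfolding rev_factor_free_def cls_eq by force

lemma nosub:
  assumes "rev_factor_free T" "x \<in> tilde T" "y \<in> tilde T" "cls x \<noteq> cls y"
  shows "\<not> sublist x y"
proof
  assume sub: "sublist x y"
  obtain s where s: "s \<in> T" "cls x = cls s" using assms tilde_cls by blast
  obtain s' where s': "s' \<in> T" "cls y = cls s'" using assms tilde_cls by blast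
  have "s \<noteq> s'" using s s' assms by auto
  then have n: "\<not> sublist s s'" "\<not> sublist s (rev s')" using assms s s' unfolding rev_factor_free_def by auto
  from s s' have "x = s \<or> x = rev s" "y = s' \<or> y = rev s'" by (auto simp: cls_eq)
  then show False using sub n by (metis rev_rev_ident sublist_rev)
qed

definition vpath :: "'a list set \<Rightarrow> 'a list list \<Rightarrow> bool" where
  "vpath T xs \<longleftrightarrow> distinct (map cls xs) \<and> cls ` set xs = cls ` T"

lemma vpath_rp: "vpath T xs \<Longrightarrow> vpath T (rp xs)"
  by (simp add: vpath_def rp_def rev_map[symmetric] image_image comp_def)

lemma vpath_tilde: "vpath T xs \<Longrightarrow> x \<in> set xs \<Longrightarrow> x \<in> tilde T"
  unfolding vpath_def tilde_cls by blast



lemma W_append2: "L \<noteq> [] \<Longrightarrow> R \<noteq> [] \<Longrightarrow> W (L @ R) = W L + ov (last L) (hd R) + W R"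
  by (cases R) (auto simp: W_append_cons[of L] W_snoc)

lemma W_monge:
  assumes "\<forall>c\<in>set L. ov c v \<le> ov u v" "\<forall>b\<in>set R. ov u b \<le> ov u v"
  shows "W (L @ [v]) + W (u # R) \<le> W (L @ R) + ov u v"
proof (cases "L = []")
  case True then show ?thesis using W_cons_le[of R u "ov u v"] assms by simp
next
  case LF: False
  show ?thesis
  proof (cases "R = []")
    case True then show ?thesis using W_snoc_le[of L v "ov u v"] assms by simp
  next
    case False
    have "ov (last L) v + ov u (hd R) \<le> ov (last L) (hd R) + ov u v"
      using monge[of "last L" v u "hd R"] assms LF False by simp
    then show ?thesis using LF False by (simp add: W_append2 W_snoc W_cons)
  qed
qed

lemma map_cls_rp [simp]: "map cls (rp M) = rev (map cls M)"
  by (simp add: rp_def rev_map comp_def)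

lemma rp_snoc: "rp (M @ [x]) = rev x # rp M"
  by (simp add: rp_def)

locale ms =
  fixes T :: "'a list set" and u v :: "'a list"
  assumes fin: "finite T" and rff: "rev_factor_free T"
    and uT: "u \<in> tilde T" and vT: "v \<in> tilde T" and uv: "u \<noteq> v" and urv: "u \<noteq> rev v"
    and mx: "\<forall>u'\<in>tilde T. \<forall>v'\<in>tilde T. u' \<noteq> v' \<and> u' \<noteq> rev v' \<longrightarrow> ov u' v' \<le> ov u v"
begin

definition "T0 = {z \<in> T. cls z \<noteq> cls u \<and> cls z \<noteq> cls v}"
definition "UV = otimes u v"
definition "d = ov u v"

lemma mx': "x \<in> tilde T \<Longrightarrow> y \<in> tilde T \<Longrightarrow> cls x \<noteq> cls y \<Longrightarrow> ov x y \<le> d"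
  using mx unfolding d_def by (metis cls_eq)

lemma cuv: "cls u \<noteq> cls v"
  using uv urv by (auto simp: cls_eq)

lemma d_lt: "d < length u" "d < length v"
proof -
  have s: "d \<le> length u" "d \<le> length v" "drop (length u - d) u = take d v"
    using ov_spec unfolding d_def by blast+
  show "d < length u"
  proof (rule ccontr)
    assume "\<not> d < length u"
    then have "d = length u" using s by simp
    then have "prefix u v" using s by (metis take_is_prefix diff_self_eq_0 drop_0)
    then show False using nosub[OF rff uT vT cuv] by auto
  qed
  show "d < length v"
  proof (rule ccontr)
    assume "\<not> d < length v"
    then have "d = length v" using s by simp
    then have "suffix v u" using s by (metis suffix_drop take_all_iff order_refl)
    then show False using nosub[OF rff vT uT] cuv by auto
  qed
qed

lemma len_UV: "length UV = length u + length v - d"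
  using length_otimes[of u v] d_lt unfolding UV_def d_def by simp

lemma set_eq: "(T \<union> {UV}) - {u, v, rev u, rev v} = T0 \<union> {UV}"
proof -
  have "UV \<notin> {u, v, rev u, rev v}" using len_UV d_lt by auto
  moreover have "z \<in> {u, v, rev u, rev v} \<longleftrightarrow> cls z = cls u \<or> cls z = cls v" for z
    by (auto simp: cls_eq)
  ultimately show ?thesis unfolding T0_def by auto
qed

lemma T0_sub: "z \<in> T0 \<Longrightarrow> y \<in> cls z \<Longrightarrow> \<not> sublist u y"
proof -
  assume z: "z \<in> T0" "y \<in> cls z"
  have "cls y = cls z" using z(2) by (auto simp: cls_def)
  moreover have "y \<in> tilde T" using z by (auto simp: T0_def tilde_def cls_def)
  ultimately show ?thesis using nosub[OF rff uT] z(1) unfolding T0_def by auto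
qed

lemma UV_notin: "cls UV \<notin> cls ` T0"
proof
  assume "cls UV \<in> cls ` T0"
  then obtain z where z: "z \<in> T0" "cls UV = cls z" by auto
  then have "UV \<in> cls z" by (auto simp: cls_def)
  moreover have "sublist u UV" using prefix_otimes unfolding UV_def by blast
  ultimately have "\<exists>y\<in>cls z. sublist u y" by blast
  then show False using T0_sub z(1) by blast
qed

lemma straddle:
  assumes "\<not> sublist y u" "\<not> sublist y v" "ov u y \<le> d"
  shows "\<not> sublist y UV"
proof
  assume "sublist y UV"
  then obtain a b where ab: "UV = a @ y @ b" by (auto simp: sublist_def)
  define m where "m = length u - d"
  have UVe: "UV = take m u @ v" unfolding UV_def m_def d_def by (simp add: otimes_alt)
  have lm: "length (take m u) = m" using d_lt unfolding m_def by simp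
  have pu: "take (length u) UV = u" using prefix_otimes[of u v] unfolding UV_def
    by (metis append_eq_conv_conj prefixE)
  show False
  proof (cases "m \<le> length a")
    case True
    have "drop m UV = v" using UVe lm by simp
    also have "drop m UV = drop m a @ y @ b" using ab True by simp
    finally show False using assms(2) by (metis sublist_append_leftI sublist_append_rightI sublist_order.order_trans)
  next
    case False
    show False
    proof (cases "length a + length y \<le> length u")
      case True
      then have "take (length u) UV = a @ y @ take (length u - length a - length y) b"
        using ab by simp
      then have "sublist y u" using pu by (metis sublist_appendI)
      then show False using assms(1) by simp
    next
      case False2: False
      define k where "k = length u - length a"
      have kd: "d < k" using False d_lt unfolding k_def m_def by simp
      have "k \<le> ov u y"
      proof (rule ov_ge)
        show "k \<le> length u" "k \<le> length y" using False2 unfolding k_def by auto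
        have "drop (length u - k) u = drop (length a) (take (length u) UV)"
          using pu False d_lt unfolding k_def m_def by simp
        also have "\<dots> = take k (drop (length a) UV)" unfolding k_def by (simp add: drop_take)
        also have "\<dots> = take k (y @ b)" using ab by simp
        also have "\<dots> = take k y" using False2 unfolding k_def by simp
        finally show "drop (length u - k) u = take k y" .
      qed
      then show False using kd assms(3) by simp
    qed
  qed
qed

lemma rff_new: "rev_factor_free (T0 \<union> {UV})"
proof -
  have uvin: "sublist u UV" using prefix_otimes unfolding UV_def by blast
  have A: "\<not> sublist UV z \<and> \<not> sublist UV (rev z)" if "z \<in> T0" for z
    using T0_sub[OF that] uvin sublist_order.order_trans by (metis cls_def insertCI)
  have B: "\<not> sublist y UV" if "z \<in> T0" "y \<in> cls z" for z y
  proof (rule straddle)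
    have yt: "y \<in> tilde T" "cls y = cls z" using that by (auto simp: T0_def tilde_def cls_def)
    have c: "cls y \<noteq> cls u" "cls y \<noteq> cls v" using that yt unfolding T0_def by auto
    show "\<not> sublist y u" using nosub[OF rff yt(1) uT] c by auto
    show "\<not> sublist y v" using nosub[OF rff yt(1) vT] c by auto
    show "ov u y \<le> d" using mx'[OF uT yt(1)] c by auto
  qed
  have C: "rev_factor_free T0" using rff unfolding rev_factor_free_def T0_def by auto
  show ?thesis unfolding rev_factor_free_def
  proof (intro ballI impI)
    fix x y assume xy: "x \<in> T0 \<union> {UV}" "y \<in> T0 \<union> {UV}" "x \<noteq> y"
    show "\<not> (sublist x y \<or> sublist x (rev y))"
    proof (cases "x = UV")
      case True then show ?thesis using xy A by auto
    next
      case False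
      then have x0: "x \<in> T0" using xy by auto
      show ?thesis
      proof (cases "y = UV")
        case True
        have "\<not> sublist x UV" "\<not> sublist (rev x) UV" using B[OF x0] by (auto simp: cls_def)
        then show ?thesis using True by (metis sublist_rev rev_rev_ident)
      next
        case False
        then show ?thesis using C x0 xy unfolding rev_factor_free_def by auto
      qed
    qed
  qed
qed


lemma total_eq: "total_length (T0 \<union> {UV}) + d = total_length T"
proof -
  obtain su where su: "su \<in> T" "cls u = cls su" using uT tilde_cls by blast
  obtain sv where sv: "sv \<in> T" "cls v = cls sv" using vT tilde_cls by blast
  have ne: "su \<noteq> sv" using su sv cuv by auto
  have Teq: "T = insert su (insert sv T0)"
    using su sv cls_inj[OF rff] unfolding T0_def by auto
  have nsu: "su \<notin> T0" "sv \<notin> T0" using su sv unfolding T0_def by auto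
  have f0: "finite T0" using fin unfolding T0_def by simp
  have lu: "length su = length u" "length sv = length v" using su sv by (auto simp: cls_eq)
  have UVn: "UV \<notin> T0" using UV_notin by auto
  have "sum length (insert su (insert sv T0)) = sum length T0 + length u + length v"
    using nsu ne f0 lu by simp
  then have "total_length T = total_length T0 + length u + length v"
    unfolding total_length_def using Teq by metis
  moreover have "total_length (T0 \<union> {UV}) = total_length T0 + length UV"
    unfolding total_length_def using f0 UVn by simp
  ultimately show ?thesis using len_UV d_lt by simp
qed

lemma vpath_transfer:
  assumes vp: "vpath T xs" and m1: "mset (map cls xs) = mset (zs @ [cls u, cls v])"
    and m2: "mset (map cls ys) = mset (zs @ [cls UV])"
  shows "vpath (T0 \<union> {UV}) ys"
proof -
  have d1: "distinct (zs @ [cls u, cls v])" using vp m1 mset_eq_imp_distinct_iff unfolding vpath_def by blast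
  have s1: "set (zs @ [cls u, cls v]) = cls ` T" using vp m1 mset_eq_setD unfolding vpath_def
    by (metis set_map)
  have "set zs = cls ` T0"
  proof
    show "set zs \<subseteq> cls ` T0"
    proof
      fix c assume c: "c \<in> set zs"
      have "c \<in> cls ` T" using s1 c by auto
      then obtain z where z: "z \<in> T" "c = cls z" by auto
      have "c \<noteq> cls u" "c \<noteq> cls v" using d1 c by auto
      then show "c \<in> cls ` T0" using z unfolding T0_def by auto
    qed
    show "cls ` T0 \<subseteq> set zs" using s1 unfolding T0_def by auto
  qed
  then have d2: "distinct (zs @ [cls UV])" using d1 UV_notin by auto
  have "distinct (map cls ys)" using d2 m2 mset_eq_imp_distinct_iff by blast
  moreover have "cls ` set ys = cls ` (T0 \<union> {UV})"
    using m2 \<open>set zs = cls ` T0\<close> mset_eq_setD by (metis image_Un image_empty image_insert list.set_map set_append list.set(1) list.set(2))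
  ultimately show ?thesis unfolding vpath_def by blast
qed

end



context ms begin

lemma UV_in: "ov a u \<le> ov a UV" "ov v b \<le> ov UV b"
  unfolding UV_def by (simp_all add: ov_prefix_mono prefix_otimes ov_suffix_mono suffix_otimes)

lemma rvT: "rev v \<in> tilde T" using vT by (auto simp: tilde_def)

lemma path_case:
  assumes vp: "vpath T xs" and us: "u \<in> set xs" and vs: "v \<in> set xs \<or> rev v \<in> set xs"
  shows "\<exists>ys. vpath (T0 \<union> {UV}) ys \<and> W xs \<le> W ys + 2 * d"
proof -
  have tl: "\<And>x. x \<in> set xs \<Longrightarrow> x \<in> tilde T" using vpath_tilde[OF vp] by blast
  have dist: "distinct (map cls xs)" using vp unfolding vpath_def by blast
  have cu: "cls u \<noteq> cls v" by (rule cuv)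
  have o1: "ov v u \<le> d" using mx'[OF vT uT not_sym[OF cu]] .
  have o2: "ov u (rev v) \<le> d" using mx'[OF uT rvT] cu by simp
  have o3: "ov (rev v) u \<le> d" using mx'[OF rvT uT] not_sym[OF cu] by simp
  obtain A B where xsAB: "xs = A @ u # B" using us split_list by metis
  have rvu: "rev v \<noteq> u" using urv by auto
  consider (A1) M R where "xs = A @ u # M @ v # R"
    | (A2) L M where "xs = L @ v # M @ u # B"
    | (B1) M R where "xs = A @ u # M @ rev v # R"
    | (B2) L M where "xs = L @ rev v # M @ u # B"
  proof -
    consider "v \<in> set xs" | "rev v \<in> set xs" using vs by blast
    then show ?thesis
    proof cases
      case 1
      then have "v \<in> set A \<or> v \<in> set B" using xsAB uv by auto
      then show ?thesis
      proof
        assume "v \<in> set A"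
        then obtain L M where "A = L @ v # M" using split_list by metis
        then show ?thesis using that(2) xsAB by simp
      next
        assume "v \<in> set B"
        then obtain M R where "B = M @ v # R" using split_list by metis
        then show ?thesis using that(1) xsAB by simp
      qed
    next
      case 2
      then have "rev v \<in> set A \<or> rev v \<in> set B" using xsAB rvu by auto
      then show ?thesis
      proof
        assume "rev v \<in> set A"
        then obtain L M where "A = L @ rev v # M" using split_list by metis
        then show ?thesis using that(4) xsAB by simp
      next
        assume "rev v \<in> set B"
        then obtain M R where "B = M @ rev v # R" using split_list by metis
        then show ?thesis using that(3) xsAB by simp
      qed
    qed
  qed
  then show ?thesis
  proof cases
    case (A1 M R)
    let ?L = A
    define ys where "ys = ?L @ UV # R @ M"
    have dd: "distinct (map cls (?L @ u # M @ v # R))" using dist A1 by simp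
    have inT: "\<forall>x\<in>set ?L \<union> set M \<union> set R. x \<in> tilde T" using tl A1 by auto
    have c0: "cls u \<notin> cls ` (set ?L \<union> set M \<union> set R) \<and> cls v \<notin> cls ` (set ?L \<union> set M \<union> set R)" using dd by (simp add: image_Un)
    have c: "\<forall>x\<in>set ?L \<union> set M \<union> set R. cls x \<noteq> cls u \<and> cls x \<noteq> cls v \<and> cls u \<noteq> cls x \<and> cls v \<noteq> cls x"
      using c0 by (metis image_eqI)
    have e1: "W xs = W (?L @ [u]) + W (u # M @ [v]) + W (v # R)"
      using A1 W_append_cons[of ?L u "M @ v # R"] W_append_cons[of "u # M" v R] by simp
    have e2: "W (u # (M @ [v])) \<le> d + W (M @ [v])"
      by (rule W_cons_le) (use c inT mx'[OF uT] in \<open>auto simp: d_def\<close>)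
    have e3: "W (M @ [v]) \<le> W M + d"
      by (rule W_snoc_le) (use c inT mx'[OF _ vT] in auto)
    have e4: "W (?L @ [u]) \<le> W (?L @ [UV])" using UV_in by (simp add: W_snoc_mono)
    have e5: "W (v # R) \<le> W (UV # R)" using UV_in by (simp add: W_cons_mono)
    have e6: "W (?L @ [UV]) + W (UV # R) + W M \<le> W ys"
      using W_append_cons[of ?L UV "R @ M"] W_append_ge[of "UV # R" M] unfolding ys_def by simp
    have "vpath (T0 \<union> {UV}) ys"
      by (rule vpath_transfer[OF vp, of "map cls (?L @ M @ R)"]) (auto simp: A1 ys_def)
    moreover have "W xs \<le> W ys + 2 * d" using e1 e2 e3 e4 e5 e6 by simp
    ultimately show ?thesis by blast
  next
    case (A2 L M)
    let ?R = B
    define ys where "ys = (L @ ?R) @ (M @ [UV])"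
    have dd: "distinct (map cls (L @ v # M @ u # ?R))" using dist A2 by simp
    have inT: "\<forall>x\<in>set L \<union> set M \<union> set ?R. x \<in> tilde T" using tl A2 by auto
    have c0: "cls u \<notin> cls ` (set L \<union> set M \<union> set ?R) \<and> cls v \<notin> cls ` (set L \<union> set M \<union> set ?R)" using dd by (simp add: image_Un)
    have c: "\<forall>x\<in>set L \<union> set M \<union> set ?R. cls x \<noteq> cls u \<and> cls x \<noteq> cls v \<and> cls u \<noteq> cls x \<and> cls v \<noteq> cls x"
      using c0 by (metis image_eqI)
    have e1: "W xs = W (L @ [v]) + W (v # M @ [u]) + W (u # ?R)"
      using A2 W_append_cons[of L v "M @ u # ?R"] W_append_cons[of "v # M" u ?R] by simp
    have e2: "W (v # (M @ [u])) \<le> d + W (M @ [u])"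
      by (rule W_cons_le) (use c inT mx'[OF vT] o1 in \<open>auto\<close>)
    have e3: "W (M @ [u]) \<le> W (M @ [UV])" using UV_in by (simp add: W_snoc_mono)
    have e4: "W (L @ [v]) + W (u # ?R) \<le> W (L @ ?R) + d"
      unfolding d_def by (rule W_monge) (use c inT mx'[OF _ vT] mx'[OF uT] in \<open>auto simp: d_def\<close>)
    have e6: "W (L @ ?R) + W (M @ [UV]) \<le> W ys"
      using W_append_ge unfolding ys_def by blast
    have "vpath (T0 \<union> {UV}) ys"
      by (rule vpath_transfer[OF vp, of "map cls (L @ M @ ?R)"]) (auto simp: A2 ys_def)
    moreover have "W xs \<le> W ys + 2 * d" using e1 e2 e3 e4 e6 by simp
    ultimately show ?thesis by blast
  next
    case (B1 M R)
    let ?L = A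
    define ys where "ys = ?L @ UV # rp M @ R"
    have dd: "distinct (map cls (?L @ u # M @ rev v # R))" using dist B1 by simp
    have inT: "\<forall>x\<in>set ?L \<union> set M \<union> set R. x \<in> tilde T" using tl B1 by auto
    have c0: "cls u \<notin> cls ` (set ?L \<union> set M \<union> set R) \<and> cls v \<notin> cls ` (set ?L \<union> set M \<union> set R)" using dd by (simp add: image_Un)
    have c: "\<forall>x\<in>set ?L \<union> set M \<union> set R. cls x \<noteq> cls u \<and> cls x \<noteq> cls v \<and> cls u \<noteq> cls x \<and> cls v \<noteq> cls x"
      using c0 by (metis image_eqI)
    have e1: "W xs = W (?L @ [u]) + W (u # M @ [rev v]) + W (rev v # R)"
      using B1 W_append_cons[of ?L u "M @ rev v # R"] W_append_cons[of "u # M" "rev v" R] by simp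
    have e2: "W (u # (M @ [rev v])) \<le> d + W (M @ [rev v])"
      by (rule W_cons_le) (use c inT mx'[OF uT] o2 in \<open>auto\<close>)
    have e3: "W (M @ [rev v]) \<le> W (UV # rp M)"
      using W_rp[of "M @ [rev v]"] W_cons_mono[of v UV "rp M"] UV_in by (simp add: rp_snoc)
    have e4: "W (?L @ [u]) \<le> W (?L @ [UV])" using UV_in by (simp add: W_snoc_mono)
    have e5: "W (rev v # R) \<le> d + W R"
      by (rule W_cons_le) (use c inT mx'[OF rvT] in auto)
    have e6: "W (?L @ [UV]) + W (UV # rp M) + W R \<le> W ys"
      using W_append_cons[of ?L UV "rp M @ R"] W_append_ge[of "UV # rp M" R] unfolding ys_def by simp
    have "vpath (T0 \<union> {UV}) ys"
      by (rule vpath_transfer[OF vp, of "map cls (?L @ M @ R)"]) (auto simp: B1 ys_def)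
    moreover have "W xs \<le> W ys + 2 * d" using e1 e2 e3 e4 e5 e6 by simp
    ultimately show ?thesis by blast
  next
    case (B2 L M)
    let ?R = B
    define ys where "ys = M @ UV # rp L @ ?R"
    have dd: "distinct (map cls (L @ rev v # M @ u # ?R))" using dist B2 by simp
    have inT: "\<forall>x\<in>set L \<union> set M \<union> set ?R. x \<in> tilde T" using tl B2 by auto
    have c0: "cls u \<notin> cls ` (set L \<union> set M \<union> set ?R) \<and> cls v \<notin> cls ` (set L \<union> set M \<union> set ?R)" using dd by (simp add: image_Un)
    have c: "\<forall>x\<in>set L \<union> set M \<union> set ?R. cls x \<noteq> cls u \<and> cls x \<noteq> cls v \<and> cls u \<noteq> cls x \<and> cls v \<noteq> cls x"
      using c0 by (metis image_eqI)
    have e1: "W xs = W (L @ [rev v]) + W (rev v # M @ [u]) + W (u # ?R)"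
      using B2 W_append_cons[of L "rev v" "M @ u # ?R"] W_append_cons[of "rev v # M" u ?R] by simp
    have e2: "W (rev v # (M @ [u])) \<le> d + W (M @ [u])"
      by (rule W_cons_le) (use c inT mx'[OF rvT] o3 in \<open>auto\<close>)
    have e3: "W (M @ [u]) \<le> W (M @ [UV])" using UV_in by (simp add: W_snoc_mono)
    have e4: "W (L @ [rev v]) \<le> W (UV # rp L)"
      using W_rp[of "L @ [rev v]"] W_cons_mono[of v UV "rp L"] UV_in by (simp add: rp_snoc)
    have e5: "W (u # ?R) \<le> d + W ?R"
      by (rule W_cons_le) (use c inT mx'[OF uT] in auto)
    have e6: "W (M @ [UV]) + W (UV # rp L) + W ?R \<le> W ys"
      using W_append_cons[of M UV "rp L @ ?R"] W_append_ge[of "UV # rp L" ?R] unfolding ys_def by simp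
    have "vpath (T0 \<union> {UV}) ys"
      by (rule vpath_transfer[OF vp, of "map cls (L @ M @ ?R)"]) (auto simp: B2 ys_def)
    moreover have "W xs \<le> W ys + 2 * d" using e1 e2 e3 e4 e5 e6 by simp
    ultimately show ?thesis by blast
  qed
qed
end



lemma vpath_single: "vpath {w} xs \<Longrightarrow> W xs = 0"
proof -
  assume vp: "vpath {w} xs"
  then have "distinct (map cls xs)" "set (map cls xs) = {cls w}" unfolding vpath_def by auto
  then have "length (map cls xs) = 1" using distinct_card by fastforce
  then have "length xs = 1" by simp
  then show ?thesis by (cases xs) auto
qed

lemma greedy_bound:
  "greedy_loop T w \<Longrightarrow> finite T \<Longrightarrow> rev_factor_free T \<Longrightarrow> vpath T xs
   \<Longrightarrow> int (W xs) \<le> 2 * (int (total_length T) - int (length w))"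
proof (induction arbitrary: xs rule: greedy_loop.induct)
  case (single w)
  then show ?case using vpath_single[of w xs] by (simp add: total_length_def)
next
  case (merge S u v w)
  interpret ms S u v using merge by unfold_locales auto
  have eqS: "S \<union> {otimes u v} - {u, v, rev u, rev v} = T0 \<union> {UV}"
    using set_eq unfolding UV_def by simp
  have fin': "finite (T0 \<union> {UV})" using fin unfolding T0_def by simp
  have vp: "vpath S xs" by fact
  have "\<exists>ys. vpath (T0 \<union> {UV}) ys \<and> W xs \<le> W ys + 2 * d"
  proof -
    have "cls u \<in> cls ` set xs" "cls v \<in> cls ` set xs"
      using vp uT vT unfolding vpath_def tilde_cls by auto
    then obtain x y where xy: "x \<in> set xs" "cls x = cls u" "y \<in> set xs" "cls y = cls v" by auto
    then have xu: "u \<in> set xs \<or> rev u \<in> set xs" and yv: "v \<in> set xs \<or> rev v \<in> set xs"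
      by (auto simp: cls_eq)
    show ?thesis
    proof (cases "u \<in> set xs")
      case True then show ?thesis using path_case[OF vp True yv] by blast
    next
      case False
      then have "u \<in> set (rp xs)" using xu by (simp add: rp_def) (metis image_eqI rev_rev_ident)
      moreover have "v \<in> set (rp xs) \<or> rev v \<in> set (rp xs)" using yv by (simp add: rp_def) (metis image_eqI rev_rev_ident)
      ultimately show ?thesis using path_case[OF vpath_rp[OF vp]] W_rp[of xs] by metis
    qed
  qed
  then obtain ys where ys: "vpath (T0 \<union> {UV}) ys" "W xs \<le> W ys + 2 * d" by blast
  have IH: "int (W ys) \<le> 2 * (int (total_length (T0 \<union> {UV})) - int (length w))"
    using merge.IH[of ys] eqS fin fin' rff_new ys(1) by simp
  have a: "int (W xs) \<le> int (W ys) + 2 * int d" using ys(2) by linarith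
  have b: "int (total_length S) = int (total_length (T0 \<union> {UV})) + int d"
    using total_eq by (metis of_nat_add)
  show ?case using IH a b by (smt (verit))
qed


lemma minpos:
  assumes "T \<noteq> {}" "\<forall>s\<in>T. sublist s t \<or> sublist (rev s) t"
  shows "\<exists>p y. p \<le> length t \<and> y \<in> tilde T \<and> prefix y (drop p t) \<and>
           (\<forall>s\<in>T. sublist s (drop p t) \<or> sublist (rev s) (drop p t))"
proof -
  define P where "P = {n. \<exists>ps y ss. y \<in> tilde T \<and> t = ps @ y @ ss \<and> n = length ps}"
  obtain s0 where s0: "s0 \<in> T" using assms(1) by blast
  have "P \<noteq> {}"
  proof -
    have "sublist s0 t \<or> sublist (rev s0) t" using assms(2) s0 by blast
    then obtain y ps ss where "y \<in> tilde T" "t = ps @ y @ ss"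
      using s0 unfolding sublist_def tilde_def by blast
    then show ?thesis unfolding P_def by blast
  qed
  then obtain n where "n \<in> P" by blast
  define p where "p = (LEAST n. n \<in> P)"
  have "p \<in> P" unfolding p_def using \<open>n \<in> P\<close> by (rule LeastI)
  then obtain ps y ss where pys: "y \<in> tilde T" "t = ps @ y @ ss" "p = length ps"
    unfolding P_def by blast
  have "p \<le> length t" using pys by simp
  moreover have "prefix y (drop p t)" using pys by simp
  moreover have "\<forall>s\<in>T. sublist s (drop p t) \<or> sublist (rev s) (drop p t)"
  proof
    fix s assume s: "s \<in> T"
    have "sublist s t \<or> sublist (rev s) t" using assms(2) s by blast
    then obtain y' ps' ss' where y': "y' = s \<or> y' = rev s" "t = ps' @ y' @ ss'"
      unfolding sublist_def by blast
    then have "length ps' \<in> P" using s unfolding P_def tilde_def by blast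
    then have "p \<le> length ps'" unfolding p_def by (rule Least_le)
    then have "drop p t = drop p ps' @ y' @ ss'" using y' by simp
    then have "sublist y' (drop p t)" by (metis sublist_appendI)
    then show "sublist s (drop p t) \<or> sublist (rev s) (drop p t)" using y' by blast
  qed
  ultimately show ?thesis using pys by blast
qed

lemma rff_subset: "rev_factor_free T \<Longrightarrow> T' \<subseteq> T \<Longrightarrow> rev_factor_free T'"
  unfolding rev_factor_free_def by blast

lemma key_ov:
  assumes "prefix x t" "prefix y (drop p t)" "\<not> sublist y x"
  shows "length x \<le> p + ov x y"
proof (cases "length x \<le> p")
  case True then show ?thesis by simp
next
  case False
  obtain r where r: "t = x @ r" using assms(1) prefixE by blast
  have dp: "drop p t = drop p x @ r" using r False by simp
  define k where "k = length x - p"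
  have lk: "length (drop p x) = k" unfolding k_def by simp
  show ?thesis
  proof (cases "length y \<le> k")
    case True
    obtain z where z: "drop p t = y @ z" using assms(2) prefixE by blast
    have "y = take (length y) (drop p t)" using z by simp
    also have "\<dots> = take (length y) (drop p x)" using dp True lk by simp
    finally have "prefix y (drop p x)" by (metis take_is_prefix)
    then have "sublist y x" by (meson prefix_imp_sublist sublist_drop sublist_order.order_trans)
    then show ?thesis using assms(3) by simp
  next
    case False2: False
    obtain z where z: "drop p t = y @ z" using assms(2) prefixE by blast
    have "k \<le> ov x y"
    proof (rule ov_ge)
      show "k \<le> length x" "k \<le> length y" using False2 unfolding k_def by auto
      have "take k y = take k (drop p t)" using z False2 by simp
      also have "\<dots> = drop p x" using dp lk by simp
      also have "drop p x = drop (length x - k) x" using False unfolding k_def by simp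
      finally show "drop (length x - k) x = take k y" by simp
    qed
    then show ?thesis using False unfolding k_def by simp
  qed
qed

lemma opt:
  "finite T \<Longrightarrow> rev_factor_free T \<Longrightarrow> x \<in> tilde T \<Longrightarrow> prefix x t \<Longrightarrow>
   (\<forall>s\<in>T. sublist s t \<or> sublist (rev s) t) \<Longrightarrow>
   \<exists>xs. vpath T xs \<and> xs \<noteq> [] \<and> hd xs = x \<and> total_length T \<le> length t + W xs"
proof (induction "card T" arbitrary: T t x rule: less_induct)
  case less
  note fin = less.prems(1) and rff = less.prems(2) and xT = less.prems(3)
    and px = less.prems(4) and occ = less.prems(5)
  obtain sx where sx: "sx \<in> T" "cls x = cls sx" using xT tilde_cls by blast
  define T' where "T' = T - {sx}"
  have Teq: "T = insert sx T'" "sx \<notin> T'" using sx unfolding T'_def by auto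
  have fin': "finite T'" using fin unfolding T'_def by simp
  have lx: "length sx = length x" using sx by (auto simp: cls_eq)
  show ?case
  proof (cases "T' = {}")
    case True
    then have T1: "T = {sx}" using Teq by simp
    have "vpath T [x]" unfolding vpath_def using T1 sx by simp
    moreover have "total_length T \<le> length t + W [x]"
      using T1 lx prefix_length_le[OF px] by (simp add: total_length_def)
    ultimately show ?thesis by (intro exI[of _ "[x]"]) simp
  next
    case False
    have occ': "\<forall>s\<in>T'. sublist s t \<or> sublist (rev s) t" using occ unfolding T'_def by blast
    obtain p y where py: "p \<le> length t" "y \<in> tilde T'" "prefix y (drop p t)"
      "\<forall>s\<in>T'. sublist s (drop p t) \<or> sublist (rev s) (drop p t)"
      using minpos[OF False occ'] by blast
    have rff': "rev_factor_free T'" using rff_subset[OF rff] unfolding T'_def by blast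
    have lt: "card T' < card T" unfolding T'_def by (rule card_Diff1_less[OF fin sx(1)])
    obtain xs' where xs': "vpath T' xs'" "xs' \<noteq> []" "hd xs' = y"
      "total_length T' \<le> length (drop p t) + W xs'"
      using less.hyps[OF lt fin' rff' py(2) py(3) py(4)] by blast
    have yT: "y \<in> tilde T" using py(2) unfolding T'_def tilde_def by auto
    obtain sy where sy: "sy \<in> T'" "cls y = cls sy" using py(2) tilde_cls by blast
    have cxy: "cls x \<noteq> cls y"
    proof
      assume "cls x = cls y"
      then have "cls sx = cls sy" using sx sy by simp
      then have "sx = sy" using cls_inj[OF rff sx(1)] sy Teq by auto
      then show False using sy Teq by simp
    qed
    have cx: "cls x \<notin> cls ` T'"
    proof
      assume "cls x \<in> cls ` T'"
      then obtain z where "z \<in> T'" "cls x = cls z" by auto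
      then have "sx = z" using cls_inj[OF rff sx(1)] sx Teq by auto
      then show False using \<open>z \<in> T'\<close> Teq by simp
    qed
    have "vpath T (x # xs')"
      using xs'(1) cx sx Teq unfolding vpath_def by auto
    moreover have "W (x # xs') = ov x y + W xs'" using xs' by (simp add: W_cons)
    moreover have "length x \<le> p + ov x y"
      using key_ov[OF px py(3)] nosub[OF rff yT xT] cxy by auto
    moreover have "total_length T = length x + total_length T'"
      unfolding total_length_def using Teq fin' lx by simp
    ultimately show ?thesis using xs' py(1)
      by (intro exI[of _ "x # xs'"]) auto
  qed
qed

lemma sublist_concat: "s \<in> set l \<Longrightarrow> sublist s (concat l)"
proof (induction l)
  case Nil then show ?case by simp
next
  case (Cons a l)
  then show ?case
    by (metis concat.simps(2) set_ConsD sublist_append_leftI sublist_append_rightI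
        sublist_order.order_trans)
qed

lemma mrff_rff: "mrff X Y \<Longrightarrow> rev_factor_free X \<Longrightarrow> Y = X"
  by (induction rule: mrff.induct) (auto simp: rev_factor_free_def)

theorem theorem2:
  fixes S :: "'a list set" and w :: "'a list"
  assumes "finite S" and "S \<noteq> {}" and "rev_factor_free S"
    and "greedy_R S w"
  shows "2 * (int (total_length S) - int (length w))
           \<ge> int (total_length S) - int (k_min S)"
proof -
  obtain S' where S': "mrff S S'" "greedy_loop S' w" using assms(4) unfolding greedy_R_def by blast
  have SS: "S' = S" using mrff_rff[OF S'(1) assms(3)] .
  obtain l where l: "set l = S" using finite_list[OF assms(1)] by blast
  have ex: "\<exists>t. length t = length (concat l) \<and> (\<forall>s\<in>S. sublist s t \<or> sublist (rev s) t)"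
    using sublist_concat l by blast
  then have ex': "\<exists>k. \<exists>t. length t = k \<and> (\<forall>s\<in>S. sublist s t \<or> sublist (rev s) t)"
    by blast
  have "\<exists>t. length t = k_min S \<and> (\<forall>s\<in>S. sublist s t \<or> sublist (rev s) t)"
    unfolding k_min_def by (rule LeastI_ex[OF ex'])
  then obtain t where t: "length t = k_min S" "\<forall>s\<in>S. sublist s t \<or> sublist (rev s) t" by blast
  obtain p y where py: "p \<le> length t" "y \<in> tilde S" "prefix y (drop p t)"
      "\<forall>s\<in>S. sublist s (drop p t) \<or> sublist (rev s) (drop p t)"
    using minpos[OF assms(2) t(2)] by blast
  obtain xs where xs: "vpath S xs" "total_length S \<le> length (drop p t) + W xs"
    using opt[OF assms(1) assms(3) py(2) py(3) py(4)] by blast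
  have g: "int (W xs) \<le> 2 * (int (total_length S) - int (length w))"
    using greedy_bound[OF S'(2)[unfolded SS] assms(1) assms(3) xs(1)] .
  have "int (total_length S) \<le> int (k_min S) + int (W xs)" using xs(2) t(1) by simp
  then show ?thesis using g by (smt (verit))
qed

end
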